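(* Let $\sigma:\mathbb R^n\to\mathbb R^{n\times m}$ be of class $C^2$ and let $u:\mathbb R^n\to\mathbb R$ be a function of class $C^3$. Let $\bar x\in\mathbb R^n$ be a point such that $\nabla u\,\sigma(\bar x)=0$ and $\nabla u(\bar x)\neq 0$. Assume that either $S(\bar x)$ is not symmetric, or, if it is symmetric, it has at least one negative eigenvalue. Then there are $a_1,a_2\in B_1(0)$ such that $$K(\bar x)\begin{pmatrix}a_1\\ a_2\end{pmatrix}\cdot\begin{pmatrix}a_1\\ a_2\end{pmatrix}<0.$$ In particular $K(\bar x)$ has a negative eigenvalue and the target $\{x:u(x)\leq u(\bar x)\}$ is small time locally attainable (STLA) by the system $\dot x_t=\sigma(x_t)a_t$ at $\bar x$.
   Context: Consider the symmetric control system $\dot x_t=\sigma(x_t)a_t$, $x_0\in\mathbb R^n$, with piecewise continuous controls $a_\cdot:[0,+\infty)\to B_1(0)=\{a\in\mathbb R^m:|a|\le 1\}$; the columns of $\sigma$ are vector fields $\sigma_i$, $i=1,\dots,m$. Define the matrix-valued function $S:\mathbb R^n\to\mathbb R^{m\times m}$ by $S(x)={}^t\sigma(x)\,{}^tD(\nabla u\,\sigma)(x)$ (so that $S(x)a_1\cdot a_2=\nabla(\nabla u\cdot\sigma a_1)\cdot\sigma a_2(x)$), let $S^*$ be its symmetric part, and define the symmetric matrix $K:\mathbb R^n\to\mathbb R^{2m\times 2m}$, $K(x)=\begin{pmatrix}S^*(x)&{}^tS(x)\\ S(x)&S^*(x)\end{pmatrix}$. Here ${}^tA$ denotes the transpose,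 $D$ the Jacobian, and "STLA at $\bar x$" means that for every small $t>0$ there is $\delta>0$ such that from every point within distance $\delta$ of $\bar x$ the target can be reached in time less than $t$. *)

theory Defs
  imports "HOL-Analysis.Analysis"
begin

fun Ck :: "nat \<Rightarrow> ('a::real_normed_vector \<Rightarrow> 'b::real_normed_vector) \<Rightarrow> bool" where
  "Ck 0 f = continuous_on UNIV f"
| "Ck (Suc k) f = ((\<forall>x. f differentiable (at x)) \<and>
      (\<forall>v. Ck k (\<lambda>x. frechet_derivative f (at x) v)))"

definition grad :: "(real^'n \<Rightarrow> real) \<Rightarrow> real^'n \<Rightarrow> real^'n" where
  "grad f x = (\<chi> i. frechet_derivative f (at x) (axis i 1))"

definition gradu_sigma :: "(real^'n \<Rightarrow> real) \<Rightarrow> (real^'n \<Rightarrow> real^'m^'n) \<Rightarrow> real^'n \<Rightarrow> real^'m" where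
  "gradu_sigma u \<sigma> x = grad u x v* \<sigma> x"

text \<open>S(x) = (transpose sigma(x)) (transpose D(\<nabla>u \<sigma>)(x)), an m x m matrix:
  S(x)_{ij} = \<nabla>((\<nabla>u \<sigma>)_j)(x) . \<sigma>_i(x).\<close>
definition Smat :: "(real^'n \<Rightarrow> real) \<Rightarrow> (real^'n \<Rightarrow> real^'m^'n) \<Rightarrow> real^'n \<Rightarrow> real^'m^'m" where
  "Smat u \<sigma> x = (\<chi> i j. grad (\<lambda>y. gradu_sigma u \<sigma> y $ j) x \<bullet> column i (\<sigma> x))"

definition sym_part :: "real^'m^'m \<Rightarrow> real^'m^'m" where
  "sym_part A = (1/2) *\<^sub>R (A + transpose A)"

text \<open>The 2m x 2m block matrix K = [[S*, S^T],[S, S*]], indexed by 'm + 'm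
  (Inl = first block, Inr = second block).\<close>
definition Kmat :: "(real^'n \<Rightarrow> real) \<Rightarrow> (real^'n \<Rightarrow> real^'m^'n) \<Rightarrow> real^'n \<Rightarrow> real^('m + 'm)^('m + 'm)" where
  "Kmat u \<sigma> x = (let S = Smat u \<sigma> x; Ss = sym_part S in
     (\<chi> p q. (case (p, q) of
        (Inl i, Inl j) \<Rightarrow> Ss $ i $ j
      | (Inl i, Inr j) \<Rightarrow> transpose S $ i $ j
      | (Inr i, Inl j) \<Rightarrow> S $ i $ j
      | (Inr i, Inr j) \<Rightarrow> Ss $ i $ j)))"

definition stack :: "real^'m \<Rightarrow> real^'m \<Rightarrow> real^('m + 'm)" where
  "stack a1 a2 = (\<chi> k. (case k of Inl i \<Rightarrow> a1 $ i | Inr i \<Rightarrow> a2 $ i))"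

definition has_neg_eigenvalue :: "real^'k^'k \<Rightarrow> bool" where
  "has_neg_eigenvalue A \<longleftrightarrow> (\<exists>l::real. l < 0 \<and> (\<exists>v. v \<noteq> 0 \<and> A *v v = l *\<^sub>R v))"

definition piecewise_continuous_nonneg :: "(real \<Rightarrow> 'a::real_normed_vector) \<Rightarrow> bool" where
  "piecewise_continuous_nonneg a \<longleftrightarrow> (\<forall>T\<ge>0. \<exists>D. finite D \<and> D \<subseteq> {0..T} \<and>
      continuous_on ({0..T} - D) a \<and>
      (\<forall>d\<in>D. (\<exists>l. (a \<longlongrightarrow> l) (at d within ({0..T} \<inter> {..<d}))) \<and>
              (\<exists>l. (a \<longlongrightarrow> l) (at d within ({0..T} \<inter> {d<..})))))"

definition admissible_control :: "(real \<Rightarrow> real^'m) \<Rightarrow> bool" where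
  "admissible_control a \<longleftrightarrow> piecewise_continuous_nonneg a \<and> (\<forall>t\<ge>0. a t \<in> cball 0 1)"

definition trajectory :: "(real^'n \<Rightarrow> real^'m^'n) \<Rightarrow> (real \<Rightarrow> real^'m) \<Rightarrow> real^'n \<Rightarrow> real \<Rightarrow> (real \<Rightarrow> real^'n) \<Rightarrow> bool" where
  "trajectory \<sigma> a y T x \<longleftrightarrow> x 0 = y \<and> continuous_on {0..T} x \<and>
     (\<forall>s\<in>{0..T}. ((\<lambda>r. \<sigma> (x r) *v a r) has_integral (x s - y)) {0..s})"

definition STLA :: "(real^'n \<Rightarrow> real^'m^'n) \<Rightarrow> (real^'n) set \<Rightarrow> real^'n \<Rightarrow> bool" where
  "STLA \<sigma> target xbar \<longleftrightarrow> (\<forall>t>0. \<exists>\<delta>>0. \<forall>y. dist y xbar < \<delta> \<longrightarrow>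
     (\<exists>a x \<tau>. admissible_control a \<and> 0 \<le> \<tau> \<and> \<tau> < t \<and> trajectory \<sigma> a y \<tau> x \<and> x \<tau> \<in> target))"

end

theory Submission
  imports Defs
begin

lemma sum_UNIV_Plus: "(\<Sum>k\<in>(UNIV::('a::finite + 'b::finite) set). f k) = (\<Sum>i\<in>UNIV. f (Inl i)) + (\<Sum>i\<in>UNIV. f (Inr i))"
  by (subst UNIV_Plus_UNIV[symmetric], subst sum.Plus) (auto simp: comp_def)

lemma Kmat_form:
  "(Kmat u \<sigma> x *v stack a1 a2) \<bullet> stack a1 a2
   = (Smat u \<sigma> x *v a1) \<bullet> a1 + (Smat u \<sigma> x *v a2) \<bullet> a2 + 2 * ((Smat u \<sigma> x *v a1) \<bullet> a2)"
proof -
  define S where "S = Smat u \<sigma> x"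
  define B where "B = (\<lambda>a b. (\<Sum>i\<in>UNIV. \<Sum>j\<in>UNIV. S$i$j * a$j * b$i))"
  have sw: "(\<Sum>i\<in>UNIV. \<Sum>j\<in>UNIV. S$j$i * a$j * b$i) = B b a" for a b
    unfolding B_def by (subst sum.swap) (simp add: mult_ac)
  have "(Kmat u \<sigma> x *v stack a1 a2) \<bullet> stack a1 a2 =
     (\<Sum>i\<in>UNIV. (\<Sum>j\<in>UNIV. ((1/2) * (S$i$j + S$j$i)) * a1$j + S$j$i * a2$j) * a1$i)
   + (\<Sum>i\<in>UNIV. (\<Sum>j\<in>UNIV. S$i$j * a1$j + ((1/2) * (S$i$j + S$j$i)) * a2$j) * a2$i)"
    unfolding Kmat_def stack_def inner_vec_def matrix_vector_mult_def Let_def S_def[symmetric]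
    by (simp add: sum_UNIV_Plus sym_part_def transpose_def sum.distrib)
  also have "\<dots> = (1/2) * B a1 a1 + (1/2) * (\<Sum>i\<in>UNIV. \<Sum>j\<in>UNIV. S$j$i * a1$j * a1$i)
      + (\<Sum>i\<in>UNIV. \<Sum>j\<in>UNIV. S$j$i * a2$j * a1$i) + B a1 a2
      + (1/2) * B a2 a2 + (1/2) * (\<Sum>i\<in>UNIV. \<Sum>j\<in>UNIV. S$j$i * a2$j * a2$i)"
    unfolding B_def
    by (simp add: sum.distrib algebra_simps sum_distrib_left sum_distrib_right)
  also have "\<dots> = B a1 a1 + B a2 a2 + 2 * B a1 a2"
    unfolding sw by simp
  also have "\<dots> = (S *v a1) \<bullet> a1 + (S *v a2) \<bullet> a2 + 2 * ((S *v a1) \<bullet> a2)"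
    unfolding inner_vec_def matrix_vector_mult_def B_def
    by (simp add: sum_distrib_left sum_distrib_right mult_ac)
  finally show ?thesis by (simp add: S_def)
qed


lemma sym_dot:
  fixes K :: "real^'k^'k"
  assumes "transpose K = K"
  shows "(K *v z) \<bullet> w = (K *v w) \<bullet> z"
proof -
  have "(K *v z) \<bullet> w = (z v* transpose K) \<bullet> w" by simp
  also have "\<dots> = z \<bullet> (K *v w)" using assms by (simp add: dot_lmul_matrix)
  finally show ?thesis by (simp add: inner_commute)
qed

lemma quad_nonneg_lin0:
  fixes c d :: real
  assumes "\<And>t. 0 \<le> 2 * t * c + t^2 * d"
  shows "c = 0"
proof (rule ccontr)
  assume "c \<noteq> 0"
  define e where "e = \<bar>d\<bar> + 1"
  have pos: "e > 0" "d \<le> e" unfolding e_def by auto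
  define t where "t = - c / (2 * e)"
  have "2 * t * c + t^2 * d \<le> 2 * t * c + t^2 * e"
    using mult_left_mono[of d e "t^2"] pos by simp
  also have "\<dots> = -(3 * c^2) / (4 * e)"
    using pos unfolding t_def by (simp add: field_simps power2_eq_square)
  also have "\<dots> < 0" using \<open>c \<noteq> 0\<close> pos by (simp add: divide_neg_pos)
  finally show False using assms[of t] by simp
qed

lemma neg_form_imp_neg_eig:
  fixes K :: "real^'k^'k"
  assumes symK: "transpose K = K" and v: "(K *v v) \<bullet> v < 0"
  shows "has_neg_eigenvalue K"
proof -
  define f where "f = (\<lambda>w. (K *v w) \<bullet> w)"
  have contf: "continuous_on UNIV f" unfolding f_def
    by (intro continuous_intros continuous_on_compose2[OF matrix_vector_mult_linear_continuous_on[of UNIV K]]) auto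
  have v0: "v \<noteq> 0" using v by auto
  have ne: "sphere (0::real^'k) 1 \<noteq> {}"
  proof -
    have "axis undefined 1 \<in> sphere (0::real^'k) 1" by (simp add: norm_axis_1)
    then show ?thesis by blast
  qed
  obtain w0 where w0: "w0 \<in> sphere 0 1" and min: "\<And>w. w \<in> sphere 0 1 \<Longrightarrow> f w0 \<le> f w"
    using continuous_attains_inf[OF compact_sphere ne continuous_on_subset[OF contf subset_UNIV]] by auto
  define l where "l = f w0"
  have fscale: "f (c *\<^sub>R w) = c^2 * f w" for c w
    unfolding f_def by (simp add: matrix_vector_mult_scaleR power2_eq_square)
  have ge: "f w \<ge> l * (norm w)^2" for w
  proof (cases "w = 0")
    case True then show ?thesis by (simp add: f_def)
  next
    case False
    have "w /\<^sub>R norm w \<in> sphere 0 1" using False by simp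
    then have "l \<le> f (w /\<^sub>R norm w)" using min l_def by blast
    also have "\<dots> = f w / (norm w)^2" using fscale[of "inverse (norm w)" w]
      by (simp add: power_inverse divide_inverse mult.commute)
    finally show ?thesis using False by (simp add: field_simps)
  qed
  have "l * (norm v)^2 \<le> f v" by (rule ge)
  then have "l * (norm v)^2 < 0" using v unfolding f_def by linarith
  then have lneg: "l < 0" using v0 by (simp add: mult_less_0_iff)
  have nw0: "norm w0 = 1" using w0 by simp
  have key: "0 \<le> 2 * t * ((K *v w0 - l *\<^sub>R w0) \<bullet> z) + t^2 * (f z - l * (norm z)^2)" for t z
  proof -
    have "0 \<le> f (w0 + t *\<^sub>R z) - l * (norm (w0 + t *\<^sub>R z))^2" using ge by simp
    also have "f (w0 + t *\<^sub>R z) = f w0 + t * ((K *v w0) \<bullet> z) + t * ((K *v z) \<bullet> w0) + t^2 * f z"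
      unfolding f_def by (simp add: matrix_vector_right_distrib matrix_vector_mult_scaleR
          inner_add_left inner_add_right power2_eq_square algebra_simps)
    also have "(K *v z) \<bullet> w0 = (K *v w0) \<bullet> z" by (rule sym_dot[OF symK])
    also have "(norm (w0 + t *\<^sub>R z))^2 = 1 + 2 * t * (w0 \<bullet> z) + t^2 * (norm z)^2"
    proof -
      have w0w0: "w0 \<bullet> w0 = 1" using nw0 by (simp add: dot_square_norm)
      show ?thesis unfolding power2_norm_eq_inner
        by (simp add: inner_add_left inner_add_right w0w0 inner_commute[of z w0] algebra_simps power2_eq_square)
    qed
    finally show ?thesis unfolding l_def by (simp add: inner_diff_left algebra_simps power2_eq_square)
  qed
  define z where "z = K *v w0 - l *\<^sub>R w0"
  have "z \<bullet> z = 0" using quad_nonneg_lin0[OF key[of _ z]] z_def by simp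
  then have "K *v w0 = l *\<^sub>R w0" unfolding z_def by simp
  moreover have "w0 \<noteq> 0" using nw0 by auto
  ultimately show ?thesis unfolding has_neg_eigenvalue_def using lneg by blast
qed


lemma Kmat_sym: "transpose (Kmat u \<sigma> x) = Kmat u \<sigma> x"
  unfolding Kmat_def transpose_def Let_def sym_part_def
  by (simp add: vec_eq_iff split: sum.splits)

lemma Sax: "((S::real^'m^'m) *v (a *\<^sub>R axis j 1)) \<bullet> (b *\<^sub>R axis i 1) = a * b * S$i$j"
proof -
  have "(S *v axis j 1) $ i = S$i$j"
    unfolding matrix_vector_mult_def axis_def by (simp add: if_distrib[of "\<lambda>x. _ * x"] cong: if_cong)
  then show ?thesis by (simp add: matrix_vector_mult_scaleR inner_axis inner_scaleR_right)
qed

lemma part1: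
  fixes S :: "real^'m^'m"
  assumes "S \<noteq> transpose S \<or> (S = transpose S \<and> has_neg_eigenvalue S)"
  shows "\<exists>a1 a2. a1 \<in> cball 0 1 \<and> a2 \<in> cball 0 1 \<and>
     (S *v a1) \<bullet> a1 + (S *v a2) \<bullet> a2 + 2 * ((S *v a1) \<bullet> a2) < 0"
  using assms
proof
  assume "S = transpose S \<and> has_neg_eigenvalue S"
  then obtain l v where l: "l < 0" "v \<noteq> 0" "S *v v = l *\<^sub>R v"
    unfolding has_neg_eigenvalue_def by blast
  define w where "w = v /\<^sub>R norm v"
  have "S *v w = l *\<^sub>R w" unfolding w_def using l by (simp add: matrix_vector_mult_scaleR)
  moreover have "w \<bullet> w = 1" using l unfolding w_def by (simp add: inner_commute dot_square_norm)
  moreover have "w \<in> cball 0 1" unfolding w_def using l by simp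
  ultimately show ?thesis using l by (intro exI[of _ w]) auto
next
  assume "S \<noteq> transpose S"
  then obtain p q where pq: "S$p$q \<noteq> S$q$p"
  proof -
    have "\<not> (\<forall>p q. S$p$q = S$q$p)"
    proof
      assume "\<forall>p q. S$p$q = S$q$p"
      then have "S = transpose S" by (simp add: vec_eq_iff transpose_def)
      then show False using \<open>S \<noteq> transpose S\<close> by simp
    qed
    then show ?thesis using that by blast
  qed
  define d where "d = S$p$q - S$q$p"
  define c :: real where "c = (if d > 0 then -1 else 1)"
  have cd: "c * d = - \<bar>d\<bar>" "\<bar>c\<bar> = 1" unfolding c_def by auto
  define s where "s = min 1 (\<bar>d\<bar> / (2 * (\<bar>S$p$p\<bar> + 1)))"
  have dpos: "\<bar>d\<bar> > 0" using pq d_def by simp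
  have s: "0 < s" "s \<le> 1" "s * \<bar>S$p$p\<bar> < \<bar>d\<bar>"
  proof -
    show "0 < s" "s \<le> 1" unfolding s_def using dpos by auto
    have "s * \<bar>S$p$p\<bar> \<le> (\<bar>d\<bar> / (2 * (\<bar>S$p$p\<bar> + 1))) * (\<bar>S$p$p\<bar> + 1)"
      unfolding s_def by (intro mult_mono) auto
    also have "\<dots> = \<bar>d\<bar> / 2" by (simp add: field_simps)
    finally show "s * \<bar>S$p$p\<bar> < \<bar>d\<bar>" using dpos by simp
  qed
  define x :: "real^'m" where "x = c *\<^sub>R axis q 1"
  define z :: "real^'m" where "z = s *\<^sub>R axis p 1"
  define a1 where "a1 = (1/2) *\<^sub>R x"
  define a2 where "a2 = (1/2) *\<^sub>R (z - x)"
  define F where "F = (\<lambda>a1 a2. (S *v a1) \<bullet> a1 + (S *v a2) \<bullet> a2 + 2 * ((S *v a1) \<bullet> a2))"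
  have Fid: "F x (z - x) = (S *v z) \<bullet> z + (S *v x) \<bullet> z - (S *v z) \<bullet> x"
    unfolding F_def by (simp add: matrix_vector_mult_diff_distrib inner_diff_left inner_diff_right
        inner_commute[of x "S *v x"] inner_commute[of z "S *v x"] inner_commute[of x "S *v z"])
  have Fsc: "F a1 a2 = (1/4) * F x (z - x)"
    unfolding F_def a1_def a2_def by (simp add: matrix_vector_mult_scaleR algebra_simps)
  have e1: "(S *v z) \<bullet> z = s^2 * S$p$p" unfolding z_def Sax by (simp add: power2_eq_square)
  have e2: "(S *v x) \<bullet> z = c * s * S$p$q" unfolding z_def x_def Sax by simp
  have e3: "(S *v z) \<bullet> x = c * s * S$q$p" unfolding z_def x_def Sax by (simp add: mult_ac)
  have "F x (z - x) = s * (s * S$p$p + c * d)" unfolding Fid e1 e2 e3 d_def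
    by (simp add: algebra_simps power2_eq_square)
  also have "\<dots> < 0"
  proof -
    have "s * S$p$p \<le> s * \<bar>S$p$p\<bar>" using s by (intro mult_left_mono) auto
    then have "s * S$p$p + c * d < 0" using s cd by linarith
    then show ?thesis using s by (simp add: mult_pos_neg)
  qed
  finally have "F a1 a2 < 0" using Fsc by simp
  moreover have "a1 \<in> cball 0 1" unfolding a1_def x_def using cd by simp
  moreover have "a2 \<in> cball 0 1"
  proof -
    have "norm (z - x) \<le> norm z + norm x" by (rule norm_triangle_ineq4)
    also have "\<dots> \<le> 2" unfolding z_def x_def using s cd by simp
    finally show ?thesis unfolding a2_def by simp
  qed
  ultimately show ?thesis unfolding F_def by blast
qed


lemma ode_local:
  fixes F :: "'a::euclidean_space \<Rightarrow> 'a"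
  assumes contF: "continuous_on UNIV F"
    and bnd: "\<And>z. z \<in> cball c R \<Longrightarrow> norm (F z) \<le> M"
    and lip: "\<And>z z'. z \<in> cball c R \<Longrightarrow> z' \<in> cball c R \<Longrightarrow> norm (F z - F z') \<le> L * norm (z - z')"
    and L0: "0 \<le> L" and M0: "0 \<le> M" and T0: "0 < T" and TL: "T * L < 1" and yR: "dist y c + T * M \<le> R"
  shows "\<exists>x. x t0 = y \<and> continuous_on {t0..t0+T} x \<and>
     (\<forall>s\<in>{t0..t0+T}. dist (x s) y \<le> M * (s - t0) \<and>
        (x has_vector_derivative F (x s)) (at s within {t0..t0+T}) \<and>
        ((\<lambda>r. F (x r)) has_integral (x s - y)) {t0..s})"
proof -
  define C where "C = cball c R"
  have "0 \<le> T * M" using T0 M0 by simp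
  then have R0: "0 \<le> R" using yR zero_le_dist[of y c] by linarith
  have Cne: "C \<noteq> {}" "convex C" "closed C" using R0 unfolding C_def by auto
  define cp where "cp = closest_point C"
  have cpC: "cp z \<in> C" for z unfolding cp_def using closest_point_in_set[OF Cne(3,1)] .
  have cplip: "dist (cp z) (cp z') \<le> dist z z'" for z z'
    unfolding cp_def by (rule closest_point_lipschitz[OF Cne(2,3,1)])
  have cpid: "z \<in> C \<Longrightarrow> cp z = z" for z unfolding cp_def by (rule closest_point_self)
  define G where "G = (\<lambda>z. F (cp z))"
  have contG: "continuous_on UNIV G"
  proof -
    have "continuous_on UNIV cp" unfolding cp_def
      using continuous_at_closest_point[OF Cne(2,3,1)] by (simp add: continuous_at_imp_continuous_on)
    then show ?thesis unfolding G_def using contF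
      by (metis continuous_on_compose2 subset_UNIV)
  qed
  have Gbnd: "norm (G z) \<le> M" for z unfolding G_def using bnd cpC C_def by blast
  have Glip: "norm (G z - G z') \<le> L * norm (z - z')" for z z'
  proof -
    have "norm (G z - G z') \<le> L * norm (cp z - cp z')" unfolding G_def using lip cpC C_def by blast
    also have "\<dots> \<le> L * norm (z - z')" using cplip[of z z'] L0 by (simp add: dist_norm mult_left_mono)
    finally show ?thesis .
  qed
  define I where "I = {t0..t0+T}"
  have cbI: "cbox t0 (t0+T) = I" unfolding I_def by simp
  have contGg: "continuous_on A (\<lambda>r. G (apply_bcontfun g r))" for A and g :: "real \<Rightarrow>\<^sub>C 'a"
    by (metis contG continuous_on_apply_bcontfun continuous_on_compose2 subset_UNIV)
  have intG: "(\<lambda>r. G (apply_bcontfun g r)) integrable_on {a..b}" for a b and g :: "real \<Rightarrow>\<^sub>C 'a"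
    by (rule integrable_continuous_real[OF contGg])
  define Phi where "Phi = (\<lambda>(g :: real \<Rightarrow>\<^sub>C 'a) t. y + integral {t0..t} (\<lambda>r. G (g r)))"
  have contPhi: "continuous_on I (Phi g)" for g
  proof -
    have "continuous_on I (\<lambda>t. integral {t0..t} (\<lambda>r. G (g r)))" unfolding I_def
      by (intro indefinite_integral_continuous_1 intG)
    then show ?thesis unfolding Phi_def by (intro continuous_intros)
  qed
  have exP: "\<exists>h :: real \<Rightarrow>\<^sub>C 'a. \<forall>t. h t = Phi g (clamp t0 (t0+T) t)" for g
  proof -
    obtain h :: "real \<Rightarrow>\<^sub>C 'a" where "\<And>t. h t = Phi g (clamp t0 (t0+T) t)"
      using continuous_on_cbox_bcontfunE[of t0 "t0+T" "Phi g"] contPhi cbI by metis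
    then show ?thesis by blast
  qed
  define P where "P = (\<lambda>g. SOME h :: real \<Rightarrow>\<^sub>C 'a. \<forall>t. h t = Phi g (clamp t0 (t0+T) t))"
  have P: "P g t = Phi g (clamp t0 (t0+T) t)" for g t
    unfolding P_def using someI_ex[OF exP[of g]] by blast
  have clI: "clamp t0 (t0+T) t \<in> I" for t
    using clamp_in_interval[of t0 "t0+T" t] T0 unfolding I_def by simp
  have intbound: "norm (integral {t0..s} (\<lambda>r. G (g r)) - integral {t0..s} (\<lambda>r. G (g' r)))
      \<le> L * dist g g' * (s - t0)" if "s \<in> I" for s and g g' :: "real \<Rightarrow>\<^sub>C 'a"
  proof -
    have "integral {t0..s} (\<lambda>r. G (g r)) - integral {t0..s} (\<lambda>r. G (g' r))
        = integral {t0..s} (\<lambda>r. G (g r) - G (g' r))"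
      using integral_diff[OF intG[of g t0 s] intG[of g' t0 s]] by simp
    also have "norm \<dots> \<le> L * dist g g' * measure lborel {t0..s}"
    proof (rule has_integral_bound_real[where S="{}"])
      show "0 \<le> L * dist g g'" using L0 by simp
      show "((\<lambda>r. G (g r) - G (g' r)) has_integral integral {t0..s} (\<lambda>r. G (g r) - G (g' r))) {t0..s}"
        using integrable_diff[OF intG intG] by (simp add: has_integral_integral)
      fix r
      have "norm (G (g r) - G (g' r)) \<le> L * norm (g r - g' r)" by (rule Glip)
      also have "\<dots> \<le> L * dist g g'" using dist_bounded[of g r g'] L0
        by (simp add: dist_norm mult_left_mono)
      finally show "norm (G (g r) - G (g' r)) \<le> L * dist g g'" .
    qed simp
    also have "measure lborel {t0..s} = s - t0" using that unfolding I_def by simp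
    finally show ?thesis .
  qed
  have contr: "dist (P g) (P g') \<le> (T * L) * dist g g'" for g g'
  proof (rule dist_bound)
    fix t
    define s where "s = clamp t0 (t0+T) t"
    have s: "s \<in> I" unfolding s_def by (rule clI)
    have "dist (P g t) (P g' t) = norm (integral {t0..s} (\<lambda>r. G (g r)) - integral {t0..s} (\<lambda>r. G (g' r)))"
      unfolding P s_def[symmetric] Phi_def by (simp add: dist_norm)
    also have "\<dots> \<le> L * dist g g' * (s - t0)" by (rule intbound[OF s])
    also have "\<dots> \<le> L * dist g g' * T" using s L0 unfolding I_def
      by (intro mult_left_mono) auto
    finally show "dist (P g t) (P g' t) \<le> (T * L) * dist g g'" by (simp add: mult_ac)
  qed
  obtain g where gfix: "P g = g"
    using banach_fix_type[of "T * L" P] contr T0 L0 TL by auto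
  have geq: "g s = y + integral {t0..s} (\<lambda>r. G (g r))" if "s \<in> I" for s
  proof -
    have "g s = P g s" using gfix by simp
    also have "\<dots> = Phi g s" unfolding P using that cbI by simp
    finally show ?thesis unfolding Phi_def by simp
  qed
  have gdist: "dist (g s) y \<le> M * (s - t0)" if "s \<in> I" for s
  proof -
    have "norm (integral {t0..s} (\<lambda>r. G (g r))) \<le> M * measure lborel {t0..s}"
      by (rule has_integral_bound_real[where S="{}"]) (use M0 Gbnd intG[unfolded has_integral_integral] in auto)
    then show ?thesis using geq[OF that] that unfolding I_def by (simp add: dist_norm)
  qed
  have ginC: "g s \<in> C" if "s \<in> I" for s
  proof -
    have "dist c (g s) \<le> dist c y + dist y (g s)" by (rule dist_triangle)
    also have "\<dots> \<le> dist y c + M * T"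
    proof -
      have "M * (s - t0) \<le> M * T" using that M0 unfolding I_def by (intro mult_left_mono) auto
      then show ?thesis using gdist[OF that] by (simp add: dist_commute)
    qed
    finally show ?thesis unfolding C_def using yR by (simp add: mult.commute)
  qed
  have GF: "G (g s) = F (g s)" if "s \<in> I" for s unfolding G_def using cpid ginC that by simp
  show ?thesis
  proof (intro exI conjI ballI)
    show "g t0 = y" using geq[of t0] T0 unfolding I_def by simp
    show "continuous_on {t0..t0+T} g" by simp
    fix s assume s: "s \<in> {t0..t0+T}"
    then have sI: "s \<in> I" unfolding I_def .
    show "dist (g s) y \<le> M * (s - t0)" by (rule gdist[OF sI])
    have "((\<lambda>r. y + integral {t0..r} (\<lambda>r. G (g r))) has_vector_derivative G (g s)) (at s within I)"
      unfolding I_def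
      using has_vector_derivative_add[OF has_vector_derivative_const[of y]
          integral_has_vector_derivative[OF contGg s]] by simp
    then have "(g has_vector_derivative G (g s)) (at s within I)"
      by (rule has_vector_derivative_transform[OF sI geq, rotated])
    then show "(g has_vector_derivative F (g s)) (at s within {t0..t0+T})"
      using GF[OF sI] unfolding I_def by simp
    have "((\<lambda>r. G (g r)) has_integral (g s - y)) {t0..s}"
      using geq[OF sI] intG[of g t0 s] by (simp add: has_integral_integral)
    moreover have "r \<in> {t0..s} \<Longrightarrow> G (g r) = F (g r)" for r using GF s unfolding I_def by auto
    ultimately show "((\<lambda>r. F (g r)) has_integral (g s - y)) {t0..s}"
      using has_integral_cong[of "{t0..s}" "\<lambda>r. G (g r)" "\<lambda>r. F (g r)"] by blast
  qed
qed


lemma Ck_cont: "Ck k f \<Longrightarrow> continuous_on UNIV f"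
  by (cases k) (auto intro: differentiable_imp_continuous_on differentiable_at_imp_differentiable_on)

lemma Ck_diff: "Ck (Suc k) f \<Longrightarrow> f differentiable (at x)"
  by simp

lemma Ck_deriv: "Ck (Suc k) f \<Longrightarrow> Ck k (\<lambda>x. frechet_derivative f (at x) v)"
  by simp

lemma Ck_has_deriv: "Ck (Suc k) f \<Longrightarrow> (f has_derivative frechet_derivative f (at x)) (at x)"
  using Ck_diff frechet_derivative_works by blast

lemma lin_expand:
  fixes f :: "real^'n \<Rightarrow> 'b::real_vector"
  assumes "linear f"
  shows "f w = (\<Sum>i\<in>UNIV. w$i *\<^sub>R f (axis i 1))"
proof -
  have "w = (\<Sum>i\<in>UNIV. w$i *\<^sub>R axis i 1)"
    using basis_expansion[of w] by (simp add: scalar_mult_eq_scaleR)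
  then have "f w = f (\<Sum>i\<in>UNIV. w$i *\<^sub>R axis i 1)" by simp
  also have "\<dots> = (\<Sum>i\<in>UNIV. w$i *\<^sub>R f (axis i 1))"
    using assms by (simp add: linear_sum linear_scale)
  finally show ?thesis .
qed

lemma lin_grad:
  fixes f :: "real^'n \<Rightarrow> real"
  assumes "linear f"
  shows "(\<chi> i. f (axis i 1)) \<bullet> w = f w"
  using lin_expand[OF assms, of w] by (simp add: inner_vec_def mult.commute)

lemma bl_mvc: "bounded_linear (\<lambda>A::real^'n^'m. A *v c)"
  by (auto simp: linear_conv_bounded_linear[symmetric] linear_iff matrix_vector_mult_add_rdistrib
      vec_eq_iff matrix_vector_mult_def sum_distrib_left distrib_left sum.distrib mult_ac)

definition Dg :: "(real^'n \<Rightarrow> real) \<Rightarrow> (real^'n \<Rightarrow> real^'m^'n) \<Rightarrow> 'm \<Rightarrow> real^'n \<Rightarrow> real^'n \<Rightarrow> real" where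
  "Dg u \<sigma> j z w = (\<Sum>k\<in>UNIV. \<sigma> z$k$j * frechet_derivative (\<lambda>z. frechet_derivative u (at z) (axis k 1)) (at z) w
       + frechet_derivative \<sigma> (at z) w $k$j * frechet_derivative u (at z) (axis k 1))"

context
  fixes u :: "real^'n \<Rightarrow> real" and \<sigma> :: "real^'n \<Rightarrow> real^'m^'n"
  assumes cs: "Ck 2 \<sigma>" and cu: "Ck 3 u"
begin

lemma gs_expand: "gradu_sigma u \<sigma> z $ j = (\<Sum>k\<in>UNIV. \<sigma> z$k$j * frechet_derivative u (at z) (axis k 1))"
  unfolding gradu_sigma_def vector_matrix_mult_def grad_def by (simp add: mult.commute)

lemma sig_comp_deriv: "((\<lambda>z. \<sigma> z $ k $ j) has_derivative (\<lambda>w. frechet_derivative \<sigma> (at z) w $ k $ j)) (at z)"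
proof -
  have "(\<sigma> has_derivative frechet_derivative \<sigma> (at z)) (at z)"
    using cs Ck_has_deriv[of 1 \<sigma>] by (simp add: numeral_2_eq_2)
  then show ?thesis
    using bounded_linear.has_derivative[OF bounded_linear_compose[OF bounded_linear_vec_nth bounded_linear_vec_nth]]
    by blast
qed

lemma Du_comp_deriv: "((\<lambda>z. frechet_derivative u (at z) v) has_derivative
     frechet_derivative (\<lambda>z. frechet_derivative u (at z) v) (at z)) (at z)"
proof -
  have "Ck 2 (\<lambda>z. frechet_derivative u (at z) v)" using cu by (simp add: numeral_3_eq_3 numeral_2_eq_2)
  then show ?thesis using Ck_has_deriv[of 1] by (simp add: numeral_2_eq_2)
qed

lemma g_deriv: "((\<lambda>z. gradu_sigma u \<sigma> z $ j) has_derivative Dg u \<sigma> j z) (at z)"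
proof -
  have "((\<lambda>z. \<Sum>k\<in>UNIV. \<sigma> z$k$j * frechet_derivative u (at z) (axis k 1)) has_derivative Dg u \<sigma> j z) (at z)"
    unfolding Dg_def[abs_def]
    by (intro has_derivative_sum has_derivative_mult sig_comp_deriv Du_comp_deriv)
  then show ?thesis unfolding gs_expand .
qed

lemma g_frechet: "frechet_derivative (\<lambda>z. gradu_sigma u \<sigma> z $ j) (at z) = Dg u \<sigma> j z"
  using g_deriv frechet_derivative_at by metis

lemma Dg_linear: "linear (Dg u \<sigma> j z)"
  using g_deriv has_derivative_linear by blast

lemma cont_Du: "continuous_on UNIV (\<lambda>z. frechet_derivative u (at z) v)"
proof -
  have "Ck 2 (\<lambda>z. frechet_derivative u (at z) v)" using cu by (simp add: numeral_3_eq_3 numeral_2_eq_2)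
  then show ?thesis by (rule Ck_cont)
qed

lemma cont_D2: "continuous_on UNIV (\<lambda>z. frechet_derivative (\<lambda>z. frechet_derivative u (at z) v) (at z) w)"
proof -
  have "Ck 1 (\<lambda>z. frechet_derivative (\<lambda>z. frechet_derivative u (at z) v) (at z) w)"
    using cu by (simp add: numeral_3_eq_3)
  then show ?thesis by (rule Ck_cont)
qed

lemma cont_sig: "continuous_on UNIV \<sigma>"
  using cs Ck_cont by blast

lemma cont_Ds: "continuous_on UNIV (\<lambda>z. frechet_derivative \<sigma> (at z) v)"
proof -
  have "Ck 1 (\<lambda>z. frechet_derivative \<sigma> (at z) v)" using cs by (simp add: numeral_2_eq_2)
  then show ?thesis by (rule Ck_cont)
qed

lemma cont_Dg: "continuous_on UNIV (\<lambda>z. Dg u \<sigma> j z v)"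
  unfolding Dg_def
  by (intro continuous_intros cont_Du cont_D2 cont_sig cont_Ds)

lemma Smat_expand: "Smat u \<sigma> z $ p $ j = Dg u \<sigma> j z (column p (\<sigma> z))"
proof -
  have "Smat u \<sigma> z $ p $ j = (\<chi> i. Dg u \<sigma> j z (axis i 1)) \<bullet> column p (\<sigma> z)"
    unfolding Smat_def grad_def g_frechet by simp
  also have "\<dots> = Dg u \<sigma> j z (column p (\<sigma> z))" by (rule lin_grad[OF Dg_linear])
  finally show ?thesis .
qed

lemma cont_Smat: "continuous_on UNIV (\<lambda>z. Smat u \<sigma> z $ p $ j)"
proof -
  have "Smat u \<sigma> z $ p $ j = (\<Sum>k\<in>UNIV. column p (\<sigma> z) $ k * Dg u \<sigma> j z (axis k 1))" for z
    unfolding Smat_expand by (rule lin_expand[OF Dg_linear, of j z "column p (\<sigma> z)", simplified])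
  moreover have "continuous_on UNIV (\<lambda>z. \<Sum>k\<in>UNIV. column p (\<sigma> z) $ k * Dg u \<sigma> j z (axis k 1))"
    unfolding column_def by (intro continuous_intros cont_Dg cont_sig) 
  ultimately show ?thesis by simp
qed

definition "Hf z b b' = (Smat u \<sigma> z *v b) \<bullet> b'"

lemma cont_H: "continuous_on UNIV (\<lambda>z. Hf z b b')"
  unfolding Hf_def inner_vec_def matrix_vector_mult_def
  by (simp, intro continuous_intros cont_Smat)

definition "Gf b z = gradu_sigma u \<sigma> z \<bullet> b"

lemma G_deriv: "(Gf b has_derivative (\<lambda>w. \<Sum>j\<in>UNIV. Dg u \<sigma> j z w * b$j)) (at z)"
  unfolding Gf_def[abs_def] inner_vec_def
  by (simp, intro has_derivative_sum has_derivative_mult_left g_deriv)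

lemma G_deriv_val: "(\<Sum>j\<in>UNIV. Dg u \<sigma> j z (\<sigma> z *v b') * b$j) = Hf z b b'"
proof -
  have "Hf z b b' = (\<Sum>p\<in>UNIV. (\<Sum>j\<in>UNIV. Dg u \<sigma> j z (column p (\<sigma> z)) * b$j) * b'$p)"
    unfolding Hf_def inner_vec_def matrix_vector_mult_def Smat_expand by simp
  also have "\<dots> = (\<Sum>j\<in>UNIV. b$j * (\<Sum>p\<in>UNIV. b'$p * Dg u \<sigma> j z (column p (\<sigma> z))))"
    unfolding sum_distrib_left sum_distrib_right by (rule trans[OF sum.swap]) (simp add: mult_ac)
  also have "\<dots> = (\<Sum>j\<in>UNIV. b$j * Dg u \<sigma> j z (\<sigma> z *v b'))"
  proof -
    have "Dg u \<sigma> j z (\<sigma> z *v b') = (\<Sum>p\<in>UNIV. b'$p * Dg u \<sigma> j z (column p (\<sigma> z)))" for j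
      unfolding matrix_mult_sum scalar_mult_eq_scaleR
      using Dg_linear by (simp add: linear_sum linear_scale)
    then show ?thesis by simp
  qed
  finally show ?thesis by (simp add: mult_ac)
qed

lemma u_deriv: "(u has_derivative frechet_derivative u (at z)) (at z)"
  using cu Ck_has_deriv[of 2 u] by (simp add: numeral_3_eq_3)

lemma Du_val: "frechet_derivative u (at z) (\<sigma> z *v b) = Gf b z"
proof -
  have lin: "linear (frechet_derivative u (at z))" using u_deriv has_derivative_linear by blast
  have "Gf b z = grad u z \<bullet> (\<sigma> z *v b)" unfolding Gf_def gradu_sigma_def by (simp add: dot_lmul_matrix)
  also have "\<dots> = frechet_derivative u (at z) (\<sigma> z *v b)" unfolding grad_def by (rule lin_grad[OF lin])
  finally show ?thesis by simp
qed

lemma cont_u: "continuous_on UNIV u" using cu Ck_cont by blast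

lemma cont_G: "continuous_on UNIV (Gf b)"
  by (rule continuous_at_imp_continuous_on, rule ballI, rule has_derivative_continuous[OF G_deriv])

end


lemma chain_real:
  assumes f: "(f has_derivative f') (at (x s))" and x: "(x has_vector_derivative v) (at s)"
  shows "((\<lambda>t. f (x t)) has_real_derivative f' v) (at s)"
proof -
  have "((\<lambda>t. f (x t)) has_derivative (\<lambda>h. f' (h *\<^sub>R v))) (at s)"
    using has_derivative_compose[OF x[unfolded has_vector_derivative_def] f] .
  moreover have "(\<lambda>h. f' (h *\<^sub>R v)) = (*) (f' v)"
    using has_derivative_linear[OF f] by (auto simp: linear_scale)
  ultimately show ?thesis by (simp add: has_field_derivative_def)
qed

lemma deriv_ub:
  fixes f :: "real \<Rightarrow> real"
  assumes ab: "a \<le> b" and cf: "continuous_on {a..b} f"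
    and d: "\<And>s. a < s \<Longrightarrow> s < b \<Longrightarrow> (f has_real_derivative f' s) (at s)"
    and C: "\<And>s. a < s \<Longrightarrow> s < b \<Longrightarrow> f' s \<le> C"
  shows "f b - f a \<le> C * (b - a)"
proof (cases "a = b")
  case True then show ?thesis by simp
next
  case False
  then have "a < b" using ab by simp
  then obtain l z where z: "a < z" "z < b" "DERIV f z :> l" "f b - f a = (b - a) * l"
    using MVT[OF _ cf] d real_differentiable_def by metis
  then have "l = f' z" using d DERIV_unique by blast
  then show ?thesis using z C[of z] \<open>a < b\<close> by (simp add: mult.commute mult_right_mono)
qed

lemma two_piece:
  fixes pa qa qb pb qc da db dc :: "real \<Rightarrow> real"
  assumes h: "0 < h" and e: "0 \<le> e"
    and c1: "continuous_on {0..h} pa" "continuous_on {0..h} qa" "continuous_on {0..h} qb"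
    and c2: "continuous_on {h..2*h} pb" "continuous_on {h..2*h} qc"
    and D1: "\<And>s. 0 < s \<Longrightarrow> s < h \<Longrightarrow> (pa has_real_derivative qa s) (at s)"
    and D11: "\<And>s. 0 < s \<Longrightarrow> s < h \<Longrightarrow> (qa has_real_derivative da s) (at s)"
    and D21: "\<And>s. 0 < s \<Longrightarrow> s < h \<Longrightarrow> (qb has_real_derivative db s) (at s)"
    and D2: "\<And>s. h < s \<Longrightarrow> s < 2*h \<Longrightarrow> (pb has_real_derivative qc s) (at s)"
    and D22: "\<And>s. h < s \<Longrightarrow> s < 2*h \<Longrightarrow> (qc has_real_derivative dc s) (at s)"
    and B11: "\<And>s. 0 < s \<Longrightarrow> s < h \<Longrightarrow> da s \<le> k11 + e"
    and B21: "\<And>s. 0 < s \<Longrightarrow> s < h \<Longrightarrow> db s \<le> k21 + e"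
    and B22: "\<And>s. h < s \<Longrightarrow> s < 2*h \<Longrightarrow> dc s \<le> k22 + e"
    and m1: "pb h = pa h" and m2: "qc h = qb h"
  shows "pb (2*h) - pa 0 \<le> h * (qa 0 + qb 0) + h^2 * (k11/2 + k21 + k22/2) + 2 * h^2 * e"
proof -
  have S1: "qa s - qa 0 \<le> (k11 + e) * s" if "0 \<le> s" "s \<le> h" for s
    using deriv_ub[of 0 s qa da "k11 + e"] that continuous_on_subset[OF c1(2), of "{0..s}"] D11 B11
    by auto
  define f where "f = (\<lambda>s. pa s - s * qa 0 - s^2/2 * (k11 + e))"
  have "f h - f 0 \<le> 0 * (h - 0)"
  proof (rule deriv_ub[of 0 h f "\<lambda>s. qa s - qa 0 - s * (k11 + e)"])
    show "continuous_on {0..h} f" unfolding f_def by (intro continuous_intros c1) auto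
    fix s assume s: "0 < s" "s < h"
    show "(f has_real_derivative qa s - qa 0 - s * (k11 + e)) (at s)"
      unfolding f_def using D1[OF s] by (auto intro!: derivative_eq_intros)
    show "qa s - qa 0 - s * (k11 + e) \<le> 0" using S1[of s] s by (simp add: mult.commute)
  qed (use h in auto)
  then have S2: "pa h \<le> pa 0 + h * qa 0 + h^2/2 * (k11 + e)" unfolding f_def by simp
  have S3: "qb h - qb 0 \<le> (k21 + e) * h"
    using deriv_ub[of 0 h qb db "k21 + e"] h c1(3) D21 B21 by auto
  have S4: "qc s - qc h \<le> (k22 + e) * (s - h)" if "h \<le> s" "s \<le> 2*h" for s
    using deriv_ub[of h s qc dc "k22 + e"] that continuous_on_subset[OF c2(2), of "{h..s}"] D22 B22
    by auto
  define f2 where "f2 = (\<lambda>s. pb s - (s - h) * qc h - (s - h)^2/2 * (k22 + e))"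
  have "f2 (2*h) - f2 h \<le> 0 * (2*h - h)"
  proof (rule deriv_ub[of h "2*h" f2 "\<lambda>s. qc s - qc h - (s - h) * (k22 + e)"])
    show "continuous_on {h..2*h} f2" unfolding f2_def by (intro continuous_intros c2) auto
    fix s assume s: "h < s" "s < 2*h"
    show "(f2 has_real_derivative qc s - qc h - (s - h) * (k22 + e)) (at s)"
      unfolding f2_def using D2[OF s] by (auto intro!: derivative_eq_intros)
    show "qc s - qc h - (s - h) * (k22 + e) \<le> 0" using S4[of s] s by (simp add: mult.commute)
  qed (use h in auto)
  have S5: "pb (2*h) \<le> pb h + h * qc h + h^2/2 * (k22 + e)" 
  proof -
    have hh: "2*h - h = h" by simp
    show ?thesis using \<open>f2 (2*h) - f2 h \<le> 0 * (2*h - h)\<close> unfolding f2_def hh by simp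
  qed
  have S6: "h * qc h \<le> h * qb 0 + h^2 * (k21 + e)"
  proof -
    have "h * qc h \<le> h * (qb 0 + (k21 + e) * h)" using S3 m2 h by (intro mult_left_mono) auto
    then show ?thesis by (simp add: ring_distribs power2_eq_square mult_ac)
  qed
  have id: "h * (qa 0 + qb 0) + h^2 * (k11/2 + k21 + k22/2) + 2 * h^2 * e
     = (h * qa 0 + h^2/2 * (k11 + e)) + (h * qb 0 + h^2 * (k21 + e)) + h^2/2 * (k22 + e)"
    by (simp add: field_simps)
  show ?thesis unfolding id using S2 S5 S6 m1 by linarith
qed


definition Ncol :: "real^'m^'n \<Rightarrow> real" where "Ncol A = (\<Sum>p\<in>UNIV. norm (column p A))"

lemma norm_mv_le: "norm (A *v c) \<le> Ncol A * norm c"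
proof -
  have "A *v c = (\<Sum>p\<in>UNIV. c$p *\<^sub>R column p A)"
    by (simp add: matrix_mult_sum scalar_mult_eq_scaleR)
  then have "norm (A *v c) \<le> (\<Sum>p\<in>UNIV. norm (c$p *\<^sub>R column p A))"
    by (simp only:) (rule norm_sum)
  also have "\<dots> \<le> (\<Sum>p\<in>UNIV. norm c * norm (column p A))"
    by (intro sum_mono) (simp add: component_le_norm_cart mult_right_mono)
  finally show ?thesis by (simp add: Ncol_def sum_distrib_left mult.commute)
qed

lemma cont_Ncol: "continuous_on S f \<Longrightarrow> continuous_on S (\<lambda>z. Ncol (f z))"
  unfolding Ncol_def column_def by (intro continuous_intros)

lemma bounded_cont_on_cball:
  fixes g :: "real^'n \<Rightarrow> real"
  assumes "continuous_on UNIV g"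
  shows "\<exists>B\<ge>0. \<forall>z\<in>cball x0 r. g z \<le> B"
proof -
  have "compact (g ` cball x0 r)"
    by (rule compact_continuous_image[OF continuous_on_subset[OF assms subset_UNIV] compact_cball])
  then obtain B where "B > 0" "\<forall>y\<in>g ` cball x0 r. norm y \<le> B"
    using compact_imp_bounded bounded_pos by metis
  then show ?thesis by (intro exI[of _ B]) auto
qed

lemma sigma_bounds:
  fixes \<sigma> :: "real^'n \<Rightarrow> real^'m^'n"
  assumes cs: "Ck 2 \<sigma>"
  shows "\<exists>M L. 0 \<le> M \<and> 0 \<le> L \<and>
    (\<forall>c\<in>cball 0 1. \<forall>z\<in>cball x0 r. norm (\<sigma> z *v c) \<le> M) \<and>
    (\<forall>c\<in>cball 0 1. \<forall>z\<in>cball x0 r. \<forall>z'\<in>cball x0 r. norm (\<sigma> z *v c - \<sigma> z' *v c) \<le> L * norm (z - z'))"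
proof -
  have csig: "continuous_on UNIV \<sigma>" using cs Ck_cont by blast
  obtain M where M: "M \<ge> 0" "\<forall>z\<in>cball x0 r. Ncol (\<sigma> z) \<le> M"
    using bounded_cont_on_cball[OF cont_Ncol[OF csig]] by blast
  have cDs: "continuous_on UNIV (\<lambda>z. frechet_derivative \<sigma> (at z) v)" for v
  proof -
    have "Ck 1 (\<lambda>z. frechet_derivative \<sigma> (at z) v)" using cs by (simp add: numeral_2_eq_2)
    then show ?thesis by (rule Ck_cont)
  qed
  have "continuous_on UNIV (\<lambda>z. \<Sum>k\<in>UNIV. Ncol (frechet_derivative \<sigma> (at z) (axis k 1)))"
    by (intro continuous_on_sum cont_Ncol cDs)
  then obtain L where L: "L \<ge> 0" "\<forall>z\<in>cball x0 r. (\<Sum>k\<in>UNIV. Ncol (frechet_derivative \<sigma> (at z) (axis k 1))) \<le> L"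
    using bounded_cont_on_cball by blast
  have sd: "(\<sigma> has_derivative frechet_derivative \<sigma> (at z)) (at z)" for z
    using cs Ck_has_deriv[of 1 \<sigma>] by (simp add: numeral_2_eq_2)
  show ?thesis
  proof (intro exI conjI ballI)
    fix c :: "real^'m" and z assume c: "c \<in> cball 0 1" and z: "z \<in> cball x0 r"
    have "norm (\<sigma> z *v c) \<le> Ncol (\<sigma> z) * norm c" by (rule norm_mv_le)
    also have "\<dots> \<le> M * 1" using c z M by (intro mult_mono) (auto simp: Ncol_def)
    finally show "norm (\<sigma> z *v c) \<le> M" by simp
  next
    fix c :: "real^'m" and z z' assume c: "c \<in> cball 0 1" and z: "z \<in> cball x0 r" and z': "z' \<in> cball x0 r"
    have der: "((\<lambda>z. \<sigma> z *v c) has_derivative (\<lambda>w. frechet_derivative \<sigma> (at y) w *v c)) (at y within cball x0 r)" for y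
      using bounded_linear.has_derivative[OF bl_mvc sd] by (rule has_derivative_at_withinI)
    have onb: "onorm (\<lambda>w. frechet_derivative \<sigma> (at y) w *v c) \<le> L" if y: "y \<in> cball x0 r" for y
    proof (rule onorm_le)
      fix w :: "real^'n"
      have lin: "linear (frechet_derivative \<sigma> (at y))" using sd has_derivative_linear by blast
      have "frechet_derivative \<sigma> (at y) w *v c =
          (\<Sum>k\<in>UNIV. w$k *\<^sub>R (frechet_derivative \<sigma> (at y) (axis k 1) *v c))"
      proof -
        have L: "linear (\<lambda>A::real^'m^'n. A *v c)" by (rule bounded_linear.linear[OF bl_mvc])
        have "frechet_derivative \<sigma> (at y) w *v c = (\<Sum>k\<in>UNIV. w$k *\<^sub>R frechet_derivative \<sigma> (at y) (axis k 1)) *v c"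
          using lin_expand[OF lin, of w] by simp
        also have "\<dots> = (\<Sum>k\<in>UNIV. (w$k *\<^sub>R frechet_derivative \<sigma> (at y) (axis k 1)) *v c)"
          using linear_sum[OF L, of "\<lambda>k. w$k *\<^sub>R frechet_derivative \<sigma> (at y) (axis k 1)" UNIV]
          by (simp add: o_def)
        also have "\<dots> = (\<Sum>k\<in>UNIV. w$k *\<^sub>R (frechet_derivative \<sigma> (at y) (axis k 1) *v c))"
          using linear_scale[OF L] by simp
        finally show ?thesis .
      qed
      then have "norm (frechet_derivative \<sigma> (at y) w *v c) \<le>
          (\<Sum>k\<in>UNIV. norm (w$k *\<^sub>R (frechet_derivative \<sigma> (at y) (axis k 1) *v c)))"
        by (simp only:) (rule norm_sum)
      also have "\<dots> \<le> (\<Sum>k\<in>UNIV. norm w * Ncol (frechet_derivative \<sigma> (at y) (axis k 1)))"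
      proof (intro sum_mono)
        fix k
        have "norm (frechet_derivative \<sigma> (at y) (axis k 1) *v c) \<le> Ncol (frechet_derivative \<sigma> (at y) (axis k 1)) * norm c"
          by (rule norm_mv_le)
        also have "\<dots> \<le> Ncol (frechet_derivative \<sigma> (at y) (axis k 1))"
          using c by (intro mult_left_le) (auto simp: Ncol_def sum_nonneg)
        finally have "norm (frechet_derivative \<sigma> (at y) (axis k 1) *v c) \<le> Ncol (frechet_derivative \<sigma> (at y) (axis k 1))" .
        then show "norm (w$k *\<^sub>R (frechet_derivative \<sigma> (at y) (axis k 1) *v c)) \<le> norm w * Ncol (frechet_derivative \<sigma> (at y) (axis k 1))"
          by (simp add: component_le_norm_cart mult_mono)
      qed
      also have "\<dots> \<le> L * norm w"
      proof -
        have "(\<Sum>k\<in>UNIV. Ncol (frechet_derivative \<sigma> (at y) (axis k 1))) \<le> L" using L y by blast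
        then have "norm w * (\<Sum>k\<in>UNIV. Ncol (frechet_derivative \<sigma> (at y) (axis k 1))) \<le> norm w * L"
          by (intro mult_left_mono) auto
        then show ?thesis by (simp add: sum_distrib_left[symmetric] mult.commute)
      qed
      finally show "norm (frechet_derivative \<sigma> (at y) w *v c) \<le> L * norm w" .
    qed
    show "norm (\<sigma> z *v c - \<sigma> z' *v c) \<le> L * norm (z - z')"
      by (rule differentiable_bound[OF convex_cball der onb z z'])
  qed (use M L in auto)
qed

lemma adm_two:
  assumes b1: "b1 \<in> cball 0 1" and b2: "b2 \<in> cball 0 1"
  shows "admissible_control (\<lambda>t. if t < h then b1 else b2)"
  unfolding admissible_control_def piecewise_continuous_nonneg_def
proof (intro conjI allI impI)
  fix t :: real show "(if t < h then b1 else b2) \<in> cball 0 1" using b1 b2 by simp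
next
  fix T :: real assume "0 \<le> T"
  define a where "a = (\<lambda>t::real. if t < h then b1 else b2)"
  have ct: "isCont a t" if "t \<noteq> h" for t
  proof (cases "t < h")
    case True
    have ev: "eventually (\<lambda>s. s \<in> {..<h}) (nhds t)"
      by (rule eventually_nhds_in_open) (use True in auto)
    have "eventually (\<lambda>s. a s = b1) (nhds t)"
      by (rule eventually_mono[OF ev]) (simp add: a_def)
    then have "(a \<longlongrightarrow> b1) (at t)" by (simp add: eventually_at_filter tendsto_eventually eventually_mono)
    then show ?thesis using True unfolding isCont_def a_def by simp
  next
    case False
    then have "t > h" using that by simp
    have ev: "eventually (\<lambda>s. s \<in> {h<..}) (nhds t)"
      by (rule eventually_nhds_in_open) (use \<open>t > h\<close> in auto)
    have "eventually (\<lambda>s. a s = b2) (nhds t)"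
      by (rule eventually_mono[OF ev]) (simp add: a_def)
    then have "(a \<longlongrightarrow> b2) (at t)" by (simp add: eventually_at_filter tendsto_eventually eventually_mono)
    then show ?thesis using False unfolding isCont_def a_def by simp
  qed
  define D where "D = (if h \<in> {0..T} then {h} else {})"
  show "\<exists>D. finite D \<and> D \<subseteq> {0..T} \<and> continuous_on ({0..T} - D) (\<lambda>t. if t < h then b1 else b2) \<and>
      (\<forall>d\<in>D. (\<exists>l. ((\<lambda>t. if t < h then b1 else b2) \<longlongrightarrow> l) (at d within {0..T} \<inter> {..<d})) \<and>
             (\<exists>l. ((\<lambda>t. if t < h then b1 else b2) \<longlongrightarrow> l) (at d within {0..T} \<inter> {d<..})))"
  proof (intro exI[of _ D] conjI ballI)
    show "finite D" "D \<subseteq> {0..T}" unfolding D_def by auto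
    show "continuous_on ({0..T} - D) (\<lambda>t. if t < h then b1 else b2)"
      by (rule continuous_at_imp_continuous_on) (use ct in \<open>auto simp: D_def a_def split: if_splits\<close>)
  next
    fix d assume "d \<in> D"
    then have d: "d = h" unfolding D_def by (auto split: if_splits)
    have "((\<lambda>t. if t < h then b1 else b2) \<longlongrightarrow> b1) (at d within {0..T} \<inter> {..<d})"
      by (rule tendsto_eventually) (auto simp: d eventually_at_filter)
    then show "\<exists>l. ((\<lambda>t. if t < h then b1 else b2) \<longlongrightarrow> l) (at d within {0..T} \<inter> {..<d})" by blast
    have "((\<lambda>t. if t < h then b1 else b2) \<longlongrightarrow> b2) (at d within {0..T} \<inter> {d<..})"
      by (rule tendsto_eventually) (auto simp: d eventually_at_filter)
    then show "\<exists>l. ((\<lambda>t. if t < h then b1 else b2) \<longlongrightarrow> l) (at d within {0..T} \<inter> {d<..})" by blast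
  qed
qed

lemma traj_glue:
  fixes \<sigma> :: "real^'n \<Rightarrow> real^'m^'n"
  assumes h: "0 < h" and x10: "x1 0 = y" and x2h: "x2 h = x1 h"
    and c1: "continuous_on {0..h} x1" and c2: "continuous_on {h..h+h} x2"
    and i1: "\<forall>s\<in>{0..h}. ((\<lambda>r. \<sigma> (x1 r) *v b1) has_integral (x1 s - y)) {0..s}"
    and i2: "\<forall>s\<in>{h..h+h}. ((\<lambda>r. \<sigma> (x2 r) *v b2) has_integral (x2 s - x1 h)) {h..s}"
  shows "trajectory \<sigma> (\<lambda>t. if t < h then b1 else b2) y (2*h) (\<lambda>t. if t \<le> h then x1 t else x2 t)"
  unfolding trajectory_def
proof (intro conjI ballI)
  let ?a = "\<lambda>t::real. if t < h then b1 else b2"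
  let ?x = "\<lambda>t. if t \<le> h then x1 t else x2 t"
  show "?x 0 = y" using h x10 by simp
  show "continuous_on {0..2*h} ?x"
  proof (rule continuous_on_cases_le)
    show "continuous_on {t \<in> {0..2*h}. t \<le> h} x1" by (rule continuous_on_subset[OF c1]) auto
    show "continuous_on {t \<in> {0..2*h}. h \<le> t} x2" by (rule continuous_on_subset[OF c2]) auto
  qed (use x2h in auto)
  have first: "((\<lambda>r. \<sigma> (?x r) *v ?a r) has_integral (x1 s - y)) {0..s}" if s: "s \<in> {0..h}" for s
  proof (rule has_integral_spike_finite[of "{h}"])
    show "((\<lambda>r. \<sigma> (x1 r) *v b1) has_integral (x1 s - y)) {0..s}" using i1 s by blast
  qed (use s in auto)
  fix s assume s: "s \<in> {0..2*h}"
  show "((\<lambda>r. \<sigma> (?x r) *v ?a r) has_integral (?x s - y)) {0..s}"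
  proof (cases "s \<le> h")
    case True then show ?thesis using first[of s] s by simp
  next
    case False
    have A: "((\<lambda>r. \<sigma> (?x r) *v ?a r) has_integral (x1 h - y)) {0..h}" using first[of h] h by simp
    have "((\<lambda>r. \<sigma> (x2 r) *v b2) has_integral (x2 s - x1 h)) {h..s}" using i2 s False by auto
    moreover have "r \<in> {h..s} \<Longrightarrow> \<sigma> (?x r) *v ?a r = \<sigma> (x2 r) *v b2" for r using x2h by auto
    ultimately have B: "((\<lambda>r. \<sigma> (?x r) *v ?a r) has_integral (x2 s - x1 h)) {h..s}"
      using has_integral_cong[of "{h..s}" "\<lambda>r. \<sigma> (?x r) *v ?a r" "\<lambda>r. \<sigma> (x2 r) *v b2"] by blast
    have "((\<lambda>r. \<sigma> (?x r) *v ?a r) has_integral ((x1 h - y) + (x2 s - x1 h))) {0..s}"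
      by (rule has_integral_combine[OF _ _ A B]) (use h False in auto)
    then show ?thesis using False by simp
  qed
qed


theorem theorem2:
  fixes \<sigma> :: "real^'n \<Rightarrow> real^'m^'n" and u :: "real^'n \<Rightarrow> real" and xbar :: "real^'n"
  assumes "Ck 2 \<sigma>" and "Ck 3 u"
    and "gradu_sigma u \<sigma> xbar = 0" and "grad u xbar \<noteq> 0"
    and "Smat u \<sigma> xbar \<noteq> transpose (Smat u \<sigma> xbar)
         \<or> (Smat u \<sigma> xbar = transpose (Smat u \<sigma> xbar) \<and> has_neg_eigenvalue (Smat u \<sigma> xbar))"
  shows "(\<exists>a1 a2. a1 \<in> cball 0 1 \<and> a2 \<in> cball 0 1 \<and>
            (Kmat u \<sigma> xbar *v stack a1 a2) \<bullet> stack a1 a2 < 0)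
       \<and> has_neg_eigenvalue (Kmat u \<sigma> xbar)
       \<and> STLA \<sigma> {x. u x \<le> u xbar} xbar"
proof -
  note cs = assms(1) and cu = assms(2)
  define S where "S = Smat u \<sigma> xbar"
  obtain a1 a2 where a1: "a1 \<in> cball 0 1" and a2: "a2 \<in> cball 0 1"
    and Qneg: "(S *v a1) \<bullet> a1 + (S *v a2) \<bullet> a2 + 2 * ((S *v a1) \<bullet> a2) < 0"
    using part1[OF assms(5)[folded S_def]] by blast
  have KQ: "(Kmat u \<sigma> xbar *v stack a1 a2) \<bullet> stack a1 a2 < 0"
    using Qneg Kmat_form[of u \<sigma> xbar a1 a2] unfolding S_def by simp
  have P1: "\<exists>a1 a2. a1 \<in> cball 0 1 \<and> a2 \<in> cball 0 1 \<and>
            (Kmat u \<sigma> xbar *v stack a1 a2) \<bullet> stack a1 a2 < 0"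
    using a1 a2 KQ by blast
  have P2: "has_neg_eigenvalue (Kmat u \<sigma> xbar)"
    by (rule neg_form_imp_neg_eig[OF Kmat_sym KQ])
  have P3: "STLA \<sigma> {x. u x \<le> u xbar} xbar"
  proof -
    define b1 where "b1 = a2"
    define b2 where "b2 = a1"
    have b1: "b1 \<in> cball 0 1" and b2: "b2 \<in> cball 0 1" using a1 a2 b1_def b2_def by auto
    have Hdef: "Hf u \<sigma> z b b' = (Smat u \<sigma> z *v b) \<bullet> b'" for z b b' by (simp add: Hf_def[OF cs cu])
    define k11 where "k11 = Hf u \<sigma> xbar b1 b1"
    define k21 where "k21 = Hf u \<sigma> xbar b2 b1"
    define k22 where "k22 = Hf u \<sigma> xbar b2 b2"
    define Q where "Q = k11 + k22 + 2 * k21"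
    have Qn: "Q < 0" using Qneg unfolding Q_def k11_def k21_def k22_def Hdef S_def b1_def b2_def
      by simp
    define e where "e = - Q / 8"
    have e0: "e > 0" using Qn e_def by simp
    have nearH: "\<exists>\<rho>>0. \<forall>z. dist z xbar < \<rho> \<longrightarrow> Hf u \<sigma> z b b' \<le> Hf u \<sigma> xbar b b' + e" for b b'
    proof -
      have "continuous_on UNIV (\<lambda>z. Hf u \<sigma> z b b')" by (rule cont_H[OF cs cu])
      then obtain d where "d > 0" "\<forall>z\<in>UNIV. dist z xbar < d \<longrightarrow> dist (Hf u \<sigma> z b b') (Hf u \<sigma> xbar b b') < e"
        using e0 unfolding continuous_on_iff by blast
      then show ?thesis by (intro exI[of _ d]) (auto simp: dist_real_def)
    qed
    obtain \<rho>1 where \<rho>1: "\<rho>1 > 0" "\<forall>z. dist z xbar < \<rho>1 \<longrightarrow> Hf u \<sigma> z b1 b1 \<le> k11 + e"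
      using nearH[of b1 b1] k11_def by blast
    obtain \<rho>2 where \<rho>2: "\<rho>2 > 0" "\<forall>z. dist z xbar < \<rho>2 \<longrightarrow> Hf u \<sigma> z b2 b1 \<le> k21 + e"
      using nearH[of b2 b1] k21_def by blast
    obtain \<rho>3 where \<rho>3: "\<rho>3 > 0" "\<forall>z. dist z xbar < \<rho>3 \<longrightarrow> Hf u \<sigma> z b2 b2 \<le> k22 + e"
      using nearH[of b2 b2] k22_def by blast
    define r0 where "r0 = min \<rho>1 (min \<rho>2 \<rho>3) / 2"
    have r0: "r0 > 0" using \<rho>1 \<rho>2 \<rho>3 r0_def by simp
    have inr0: "Hf u \<sigma> z b1 b1 \<le> k11 + e \<and> Hf u \<sigma> z b2 b1 \<le> k21 + e \<and> Hf u \<sigma> z b2 b2 \<le> k22 + e"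
      if "dist z xbar \<le> r0" for z
    proof -
      have "dist z xbar < \<rho>1" "dist z xbar < \<rho>2" "dist z xbar < \<rho>3"
        using that r0 \<rho>1 \<rho>2 \<rho>3 unfolding r0_def by linarith+
      then show ?thesis using \<rho>1 \<rho>2 \<rho>3 by blast
    qed
    obtain M L where MLb: "0 \<le> M" "0 \<le> L"
      "\<forall>c\<in>cball 0 1. \<forall>z\<in>cball xbar r0. norm (\<sigma> z *v c) \<le> M"
      "\<forall>c\<in>cball 0 1. \<forall>z\<in>cball xbar r0. \<forall>z'\<in>cball xbar r0. norm (\<sigma> z *v c - \<sigma> z' *v c) \<le> L * norm (z - z')"
      using sigma_bounds[OF cs, of xbar r0] by blast
    define M' where "M' = M + 1"
    define L' where "L' = L + 1"
    have M': "M' > 0" "\<forall>c\<in>cball 0 1. \<forall>z\<in>cball xbar r0. norm (\<sigma> z *v c) \<le> M'"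
      using MLb unfolding M'_def by force+
    have L': "L' > 0" "\<forall>c\<in>cball 0 1. \<forall>z\<in>cball xbar r0. \<forall>z'\<in>cball xbar r0. norm (\<sigma> z *v c - \<sigma> z' *v c) \<le> L' * norm (z - z')"
    proof -
      show "L' > 0" using MLb L'_def by simp
      show "\<forall>c\<in>cball 0 1. \<forall>z\<in>cball xbar r0. \<forall>z'\<in>cball xbar r0. norm (\<sigma> z *v c - \<sigma> z' *v c) \<le> L' * norm (z - z')"
      proof (intro ballI)
        fix c z z' assume "c \<in> cball (0::real^'m) 1" "z \<in> cball xbar r0" "z' \<in> cball xbar r0"
        then have "norm (\<sigma> z *v c - \<sigma> z' *v c) \<le> L * norm (z - z')" using MLb by blast
        also have "\<dots> \<le> L' * norm (z - z')" unfolding L'_def by (simp add: distrib_right)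
        finally show "norm (\<sigma> z *v c - \<sigma> z' *v c) \<le> L' * norm (z - z')" .
      qed
    qed
    have contF: "continuous_on UNIV (\<lambda>z. \<sigma> z *v c)" for c :: "real^'m"
      by (rule continuous_on_compose2[OF linear_continuous_on[OF bl_mvc] cont_sig[OF cs cu]]) auto
    show ?thesis unfolding STLA_def
    proof (intro allI impI)
      fix t :: real assume t: "t > 0"
      define h where "h = min (t/4) (min (r0 / (4 * M')) (1 / (2 * L')))"
      have h0: "h > 0" using t r0 M' L' h_def by simp
      have ht: "h \<le> t/4" unfolding h_def by simp
      have hM: "h * M' \<le> r0 / 4"
      proof -
        have "h \<le> r0 / (4 * M')" unfolding h_def by simp
        then show ?thesis using M' by (simp add: field_simps)
      qed
      have hL: "h * L' < 1"
      proof -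
        have "h \<le> 1 / (2 * L')" unfolding h_def by simp
        then have "h * L' \<le> 1/2" using L' by (simp add: field_simps)
        then show ?thesis by simp
      qed
      define q where "q = h^2 * (- Q) / 4"
      have q0: "q > 0" unfolding q_def using h0 Qn by (simp add: mult_pos_neg)
      obtain d1 where d1: "d1 > 0" "\<forall>y. dist y xbar < d1 \<longrightarrow> \<bar>u y - u xbar\<bar> < q"
        using cont_u[OF cs cu] q0 unfolding continuous_on_iff dist_real_def by blast
      define \<delta> where "\<delta> = min d1 (r0 / 2)"
      have \<delta>0: "\<delta> > 0" using d1 r0 \<delta>_def by simp
      show "\<exists>\<delta>>0. \<forall>y. dist y xbar < \<delta> \<longrightarrow> (\<exists>a x \<tau>. admissible_control a \<and> 0 \<le> \<tau> \<and> \<tau> < t \<and>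
          trajectory \<sigma> a y \<tau> x \<and> x \<tau> \<in> {x. u x \<le> u xbar})"
      proof (intro exI[of _ \<delta>] conjI allI impI)
        show "\<delta> > 0" by (rule \<delta>0)
        fix y assume y: "dist y xbar < \<delta>"
        have yr: "dist y xbar < r0 / 2" using y \<delta>_def by simp
        have uy: "u y < u xbar + q" using d1 y \<delta>_def by force
        define sg :: real where "sg = (if Gf u \<sigma> b1 y + Gf u \<sigma> b2 y \<le> 0 then 1 else -1)"
        define c1 where "c1 = sg *\<^sub>R b1"
        define c2 where "c2 = sg *\<^sub>R b2"
        have sg2: "sg * sg = 1" "\<bar>sg\<bar> = 1" unfolding sg_def by auto
        have Gsc: "Gf u \<sigma> (sg *\<^sub>R b) z = sg * Gf u \<sigma> b z" for b z by (simp add: Gf_def[OF cs cu])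
        have Gc: "Gf u \<sigma> c1 y + Gf u \<sigma> c2 y \<le> 0"
        proof -
          have "Gf u \<sigma> c1 y + Gf u \<sigma> c2 y = sg * (Gf u \<sigma> b1 y + Gf u \<sigma> b2 y)"
            unfolding c1_def c2_def Gsc by (simp add: distrib_left)
          then show ?thesis unfolding sg_def by auto
        qed
        have Hsc: "Hf u \<sigma> z (sg *\<^sub>R b) (sg *\<^sub>R b') = Hf u \<sigma> z b b'" for z b b'
          unfolding Hdef by (simp add: matrix_vector_mult_scaleR sg2(1) mult.assoc[symmetric])
        have c1: "c1 \<in> cball 0 1" and c2: "c2 \<in> cball 0 1"
          using b1 b2 sg2 unfolding c1_def c2_def by auto
        obtain x1 where x1: "x1 0 = y" "continuous_on {0..0+h} x1"
          "\<forall>s\<in>{0..0+h}. dist (x1 s) y \<le> M' * (s - 0) \<and>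
              (x1 has_vector_derivative \<sigma> (x1 s) *v c1) (at s within {0..0+h}) \<and>
              ((\<lambda>r. \<sigma> (x1 r) *v c1) has_integral (x1 s - y)) {0..s}"
        proof -
          have "dist y xbar + h * M' \<le> r0" using yr hM r0 by linarith
          then show ?thesis
            using ode_local[of "\<lambda>z. \<sigma> z *v c1" xbar r0 M' L' h y 0] contF M' L' c1 h0 hL that
            by auto
        qed
        have x1': "x1 0 = y" "continuous_on {0..h} x1"
          "\<And>s. s \<in> {0..h} \<Longrightarrow> dist (x1 s) y \<le> M' * s"
          "\<And>s. s \<in> {0..h} \<Longrightarrow> (x1 has_vector_derivative \<sigma> (x1 s) *v c1) (at s within {0..h})"
          "\<forall>s\<in>{0..h}. ((\<lambda>r. \<sigma> (x1 r) *v c1) has_integral (x1 s - y)) {0..s}"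
          using x1 by auto
        have x1near: "dist (x1 s) xbar \<le> r0 / 2 + h * M'" if "s \<in> {0..h}" for s
        proof -
          have "dist (x1 s) y \<le> M' * h" using x1'(3)[OF that] that M' by (smt (verit) atLeastAtMost_iff mult_left_mono)
          then show ?thesis using yr dist_triangle[of "x1 s" xbar y] by (simp add: mult.commute)
        qed
        obtain x2 where x2: "x2 h = x1 h" "continuous_on {h..h+h} x2"
          "\<forall>s\<in>{h..h+h}. dist (x2 s) (x1 h) \<le> M' * (s - h) \<and>
              (x2 has_vector_derivative \<sigma> (x2 s) *v c2) (at s within {h..h+h}) \<and>
              ((\<lambda>r. \<sigma> (x2 r) *v c2) has_integral (x2 s - x1 h)) {h..s}"
        proof -
          have "dist (x1 h) xbar + h * M' \<le> r0" using x1near[of h] h0 hM by simp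
          then show ?thesis
            using ode_local[of "\<lambda>z. \<sigma> z *v c2" xbar r0 M' L' h "x1 h" h] contF M' L' c2 h0 hL that
            by auto
        qed
        have x2near: "dist (x2 s) xbar \<le> r0" if "s \<in> {h..h+h}" for s
        proof -
          have "dist (x2 s) (x1 h) \<le> M' * h" using x2(3) that M' by (smt (verit) atLeastAtMost_iff mult_left_mono)
          then have "dist (x2 s) xbar \<le> M' * h + (r0 / 2 + h * M')"
            using x1near[of h] h0 dist_triangle[of "x2 s" xbar "x1 h"] unfolding mult.commute[of h M'] by simp
          then show ?thesis using hM by (simp add: mult.commute)
        qed
        have x1r0: "dist (x1 s) xbar \<le> r0" if "s \<in> {0..h}" for s using x1near[OF that] hM r0 by simp
        have hh: "h + h = 2 * h" by simp
        have est: "u (x2 (2*h)) - u (x1 0) \<le> h * (Gf u \<sigma> c1 (x1 0) + Gf u \<sigma> c2 (x1 0))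
            + h^2 * (k11/2 + k21 + k22/2) + 2 * h^2 * e"
        proof (rule two_piece[where pa="\<lambda>s. u (x1 s)" and qa="\<lambda>s. Gf u \<sigma> c1 (x1 s)"
              and qb="\<lambda>s. Gf u \<sigma> c2 (x1 s)" and pb="\<lambda>s. u (x2 s)" and qc="\<lambda>s. Gf u \<sigma> c2 (x2 s)"
              and da="\<lambda>s. Hf u \<sigma> (x1 s) c1 c1" and db="\<lambda>s. Hf u \<sigma> (x1 s) c2 c1"
              and dc="\<lambda>s. Hf u \<sigma> (x2 s) c2 c2"])
          show "0 < h" "0 \<le> e" using h0 e0 by auto
          show "continuous_on {0..h} (\<lambda>s. u (x1 s))"
            by (rule continuous_on_compose2[OF cont_u[OF cs cu] x1'(2)]) auto
          show "continuous_on {0..h} (\<lambda>s. Gf u \<sigma> c1 (x1 s))"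
            by (rule continuous_on_compose2[OF cont_G[OF cs cu] x1'(2)]) auto
          show "continuous_on {0..h} (\<lambda>s. Gf u \<sigma> c2 (x1 s))"
            by (rule continuous_on_compose2[OF cont_G[OF cs cu] x1'(2)]) auto
          show "continuous_on {h..2*h} (\<lambda>s. u (x2 s))"
            by (rule continuous_on_compose2[OF cont_u[OF cs cu] x2(2)[unfolded hh]]) auto
          show "continuous_on {h..2*h} (\<lambda>s. Gf u \<sigma> c2 (x2 s))"
            by (rule continuous_on_compose2[OF cont_G[OF cs cu] x2(2)[unfolded hh]]) auto
          {
            fix s assume s: "0 < s" "s < h"
            have xd: "(x1 has_vector_derivative \<sigma> (x1 s) *v c1) (at s)"
              using x1'(4)[of s] s at_within_Icc_at[of 0 s h] by simp
            show "((\<lambda>s. u (x1 s)) has_real_derivative Gf u \<sigma> c1 (x1 s)) (at s)"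
              using chain_real[OF u_deriv[OF cs cu] xd] Du_val[OF cs cu] by simp
            show "((\<lambda>s. Gf u \<sigma> c1 (x1 s)) has_real_derivative Hf u \<sigma> (x1 s) c1 c1) (at s)"
              using chain_real[OF G_deriv[OF cs cu] xd] G_deriv_val[OF cs cu] by simp
            show "((\<lambda>s. Gf u \<sigma> c2 (x1 s)) has_real_derivative Hf u \<sigma> (x1 s) c2 c1) (at s)"
              using chain_real[OF G_deriv[OF cs cu] xd] G_deriv_val[OF cs cu] by simp
            have sI: "s \<in> {0..h}" using s by simp
            show "Hf u \<sigma> (x1 s) c1 c1 \<le> k11 + e" "Hf u \<sigma> (x1 s) c2 c1 \<le> k21 + e"
              using inr0[OF x1r0[OF sI]] unfolding c1_def c2_def Hsc by auto
          }
          {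
            fix s assume s: "h < s" "s < 2*h"
            have xd: "(x2 has_vector_derivative \<sigma> (x2 s) *v c2) (at s)"
            proof -
              have sI': "s \<in> {h..h+h}" using s by simp
              have "(x2 has_vector_derivative \<sigma> (x2 s) *v c2) (at s within {h..h+h})" using x2(3) sI' by blast
              moreover have "at s within {h..h+h} = at s" by (rule at_within_Icc_at) (use s in auto)
              ultimately show ?thesis by simp
            qed
            show "((\<lambda>s. u (x2 s)) has_real_derivative Gf u \<sigma> c2 (x2 s)) (at s)"
              using chain_real[OF u_deriv[OF cs cu] xd] Du_val[OF cs cu] by simp
            show "((\<lambda>s. Gf u \<sigma> c2 (x2 s)) has_real_derivative Hf u \<sigma> (x2 s) c2 c2) (at s)"
              using chain_real[OF G_deriv[OF cs cu] xd] G_deriv_val[OF cs cu] by simp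
            have sI: "s \<in> {h..h+h}" using s by simp
            show "Hf u \<sigma> (x2 s) c2 c2 \<le> k22 + e"
              using inr0[OF x2near[OF sI]] unfolding c2_def Hsc by auto
          }
          show "u (x2 h) = u (x1 h)" "Gf u \<sigma> c2 (x2 h) = Gf u \<sigma> c2 (x1 h)" using x2(1) by auto
        qed
        have "h * (Gf u \<sigma> c1 (x1 0) + Gf u \<sigma> c2 (x1 0)) \<le> 0"
          using Gc x1'(1) h0 by (simp add: mult_nonneg_nonpos)
        moreover have "h^2 * (k11/2 + k21 + k22/2) + 2 * h^2 * e = - q"
          unfolding q_def e_def Q_def by (simp add: field_simps)
        ultimately have fin: "u (x2 (2*h)) < u xbar" using est uy unfolding x1'(1) by linarith
        show "\<exists>a x \<tau>. admissible_control a \<and> 0 \<le> \<tau> \<and> \<tau> < t \<and>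
            trajectory \<sigma> a y \<tau> x \<and> x \<tau> \<in> {x. u x \<le> u xbar}"
        proof (intro exI conjI)
          show "admissible_control (\<lambda>t. if t < h then c1 else c2)" by (rule adm_two[OF c1 c2])
          show "0 \<le> 2 * h" "2 * h < t" using h0 ht t by auto
          show "trajectory \<sigma> (\<lambda>t. if t < h then c1 else c2) y (2*h) (\<lambda>t. if t \<le> h then x1 t else x2 t)"
            by (rule traj_glue[OF h0 x1'(1) x2(1) x1'(2) x2(2)]) (use x1'(5) x2(3) in auto)
          show "(if 2 * h \<le> h then x1 (2*h) else x2 (2*h)) \<in> {x. u x \<le> u xbar}"
            using fin h0 by simp
        qed
      qed
    qed
  qed
  show ?thesis using P1 P2 P3 by blast
qed

end
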